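(* Let $s\ge2$ and let $\mathbb{R}^{2s}$ have basis $\{U_1,\dots,U_s,T_1,\dots,T_s\}$. Let $B_{2,s}$ be the algebraic curvature tensor on $\mathbb{R}^{2s}$ with $B_{2,s}(U_i,U_j,U_k,T_l)=\delta_{il}\delta_{jk}-\delta_{ik}\delta_{jl}$ and all components on basis vectors not obtained from these via the symmetries $B(x,y,z,w)=-B(y,x,z,w)=B(z,w,x,y)$ equal to zero. Then: (1) If $\xi_1,\xi_2\in\mathbb{R}^{2s}$ are non-zero and $B_{2,s}(\xi_1,\xi_2,\eta_1,\eta_2)=0$ and $B_{2,s}(\xi_1,\eta_1,\eta_2,\xi_2)=0$ for all $\eta_1,\eta_2\in\mathbb{R}^{2s}$, then $\xi_1,\xi_2\in\operatorname{Span}\{T_1,\dots,T_s\}$. (2) $(\mathbb{R}^{2s},B_{2,s})$ is irreducible: there is no decomposition $\mathbb{R}^{2s}=W_1\oplus W_2$ with $W_1,W_2\ne0$ such that $B_{2,s}(x_1,x_2,x_3,x_4)=0$ whenever some argument lies in $W_1$ and another lies in $W_2$.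
   Context: An algebraic curvature tensor is a $4$-tensor $A$ with $A(x,y,z,w)=-A(y,x,z,w)=A(z,w,x,y)$ and $A(x,y,z,w)+A(y,z,x,w)+A(z,x,y,w)=0$. *)

theory Defs
  imports "HOL-Analysis.Analysis"
begin

text \<open>The model space R^(2s) is real^('s + 's); the basis vector U_i is
  axis (Inl i) 1 and T_i is axis (Inr i) 1.\<close>

definition kdelta :: "'s \<Rightarrow> 's \<Rightarrow> real" where
  "kdelta i j = (if i = j then 1 else 0)"

text \<open>Delta i j k l = B(U_i,U_j,U_k,T_l) = delta_il delta_jk - delta_ik delta_jl\<close>
definition Bval :: "'s \<Rightarrow> 's \<Rightarrow> 's \<Rightarrow> 's \<Rightarrow> real" where
  "Bval i j k l = kdelta i l * kdelta j k - kdelta i k * kdelta j l"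

text \<open>Components of B_{2,s} on basis vectors: the given ones and those obtained
  from them by the symmetries; all others zero.\<close>
fun Bcomp :: "'s + 's \<Rightarrow> 's + 's \<Rightarrow> 's + 's \<Rightarrow> 's + 's \<Rightarrow> real" where
  "Bcomp (Inl i) (Inl j) (Inl k) (Inr l) = Bval i j k l"
| "Bcomp (Inl i) (Inl j) (Inr l) (Inl k) = - Bval i j k l"
| "Bcomp (Inl k) (Inr l) (Inl i) (Inl j) = Bval i j k l"
| "Bcomp (Inr l) (Inl k) (Inl i) (Inl j) = - Bval i j k l"
| "Bcomp _ _ _ _ = 0"

definition B2s :: "real ^ ('s::finite + 's) \<Rightarrow> real ^ ('s + 's) \<Rightarrow> real ^ ('s + 's)
                    \<Rightarrow> real ^ ('s + 's) \<Rightarrow> real" where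
  "B2s x y z w = (\<Sum>a\<in>UNIV. \<Sum>b\<in>UNIV. \<Sum>c\<in>UNIV. \<Sum>d\<in>UNIV.
      x $ a * y $ b * z $ c * w $ d * Bcomp a b c d)"

end

theory Submission imports Defs begin

lemma ifm1: "(if P then a else b) * (c::real) = (if P then a*c else b*c)" by simp
lemma ifm2: "(c::real) * (if P then a else b) = (if P then c*a else c*b)" by simp

lemma sif: "(\<Sum>d\<in>A. if P then f d else (0::real)) = (if P then sum f A else 0)" by simp
lemma sum_UNIV_plus: "sum f (UNIV :: ('a::finite + 'b::finite) set) = sum (\<lambda>i. f (Inl i)) UNIV + sum (\<lambda>i. f (Inr i)) UNIV"
proof -
  have "sum f (UNIV :: ('a + 'b) set) = sum f (UNIV <+> UNIV)" by (simp add: UNIV_Plus_UNIV)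
  also have "\<dots> = sum (\<lambda>i. f (Inl i)) UNIV + sum (\<lambda>i. f (Inr i)) UNIV"
    by (subst sum.Plus) (auto simp: comp_def)
  finally show ?thesis .
qed

lemma B2s_axis: "B2s x (axis b 1) (axis c 1) w = (\<Sum>a\<in>UNIV. \<Sum>d\<in>UNIV. x $ a * w $ d * Bcomp a b c d)"
  unfolding B2s_def axis_def
  by (simp add: ifm1 ifm2 sum.delta sum.delta' sif cong: if_cong)

lemma E1: "B2s x (axis (Inl p) 1) (axis (Inr q) 1) w =
   - (x $ Inl q * w $ Inl p) + (if p = q then (\<Sum>i\<in>UNIV. x $ Inl i * w $ Inl i) else 0)"
  unfolding B2s_axis
  apply (simp add: sum_UNIV_plus Bval_def kdelta_def algebra_simps ifm1 ifm2 sum.delta sum.delta' sif sum_subtractf sum.distrib cong: if_cong)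
  done

lemma E2: "B2s x (axis (Inl p) 1) (axis (Inl q) 1) w =
   (if p = q then (\<Sum>i\<in>UNIV. x $ Inl i * w $ Inr i) else 0) - x $ Inl q * w $ Inr p
   - (x $ Inr q * w $ Inl p) + (if p = q then (\<Sum>i\<in>UNIV. x $ Inr i * w $ Inl i) else 0)"
  unfolding B2s_axis
  apply (simp add: sum_UNIV_plus Bval_def kdelta_def algebra_simps ifm1 ifm2 sum.delta sum.delta' sif sum_subtractf sum.distrib cong: if_cong)
  done

lemma other: assumes "CARD('s::finite) \<ge> 2" shows "\<exists>r::'s. r \<noteq> q"
proof (rule ccontr)
  assume "\<not> ?thesis"
  then have "(UNIV::'s set) = {q}" by auto
  then have "CARD('s) = card {q}" by (rule arg_cong)
  then show False using assms by simp
qed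

lemma part1:
  fixes x w :: "real ^ ('s::finite + 's)"
  assumes card: "CARD('s) \<ge> 2" and x0: "x \<noteq> 0" and w0: "w \<noteq> 0"
    and H: "\<forall>\<eta>1 \<eta>2. B2s x \<eta>1 \<eta>2 w = 0"
  shows "(\<forall>i. x $ Inl i = 0) \<and> (\<forall>i. w $ Inl i = 0)"
proof -
  have a: "x $ Inl q * w $ Inl p = 0" if "p \<noteq> q" for p q
    using H[rule_format, of "axis (Inl p) 1" "axis (Inr q) 1"] that by (simp add: E1)
  have b: "x $ Inl p * w $ Inl p = (\<Sum>i\<in>UNIV. x $ Inl i * w $ Inl i)" for p
    using H[rule_format, of "axis (Inl p) 1" "axis (Inr p) 1"] by (simp add: E1)
  have c: "x $ Inl q * w $ Inr p + x $ Inr q * w $ Inl p = 0" if "p \<noteq> q" for p q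
    using H[rule_format, of "axis (Inl p) 1" "axis (Inl q) 1"] that by (simp add: E2)
  have d: "(\<Sum>i\<in>UNIV. x $ Inl i * w $ Inr i) - x $ Inl p * w $ Inr p - x $ Inr p * w $ Inl p
      + (\<Sum>i\<in>UNIV. x $ Inr i * w $ Inl i) = 0" for p
    using H[rule_format, of "axis (Inl p) 1" "axis (Inl p) 1"] by (simp add: E2)
  have xL: "x $ Inl q = 0" for q
  proof (rule ccontr)
    assume xq: "x $ Inl q \<noteq> 0"
    obtain r where r: "r \<noteq> q" using other[OF card] by blast
    have wLp: "w $ Inl p = 0" if "p \<noteq> q" for p using a[OF that] xq by simp
    have "(\<Sum>i\<in>UNIV. x $ Inl i * w $ Inl i) = 0" using b[of r] wLp[OF r] by simp
    then have "w $ Inl q = 0" using b[of q] xq by simp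
    then have wL: "w $ Inl p = 0" for p using wLp by (cases "p = q") auto
    have wRp: "w $ Inr p = 0" if "p \<noteq> q" for p using c[OF that] xq wL by simp
    have SRL: "(\<Sum>i\<in>UNIV. x $ Inr i * w $ Inl i) = 0" using wL by simp
    have "(\<Sum>i\<in>UNIV. x $ Inl i * w $ Inr i) = 0" using d[of r] wRp[OF r] wL SRL by simp
    then have "w $ Inr q = 0" using d[of q] xq wL SRL by simp
    then have wR: "w $ Inr p = 0" for p using wRp by (cases "p = q") auto
    have "w = 0" unfolding vec_eq_iff
    proof
      fix a show "w $ a = 0 $ a" using wL wR by (cases a) auto
    qed
    then show False using w0 by simp
  qed
  have wL: "w $ Inl p = 0" for p
  proof (rule ccontr)
    assume wp: "w $ Inl p \<noteq> 0"
    obtain r where r: "r \<noteq> p" using other[OF card] by blast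
    have xRq: "x $ Inr q = 0" if "q \<noteq> p" for q using c[of p q] that wp xL by auto
    have "(\<Sum>i\<in>UNIV. x $ Inr i * w $ Inl i) = 0" using d[of r] xRq[OF r] xL by simp
    then have "x $ Inr p = 0" using d[of p] wp xL by simp
    then have xR: "x $ Inr q = 0" for q using xRq by (cases "q = p") auto
    have "x = 0" unfolding vec_eq_iff
    proof
      fix a show "x $ a = 0 $ a" using xL xR by (cases a) auto
    qed
    then show False using x0 by simp
  qed
  show ?thesis using xL wL by blast
qed

lemma inspan:
  fixes x :: "real ^ ('s::finite + 's)"
  assumes "\<forall>i. x $ Inl i = 0"
  shows "x \<in> span (range (\<lambda>i::'s. axis (Inr i) 1))"
proof -
  have eq: "x = (\<Sum>i\<in>UNIV. x $ Inr i *\<^sub>R axis (Inr i) 1)"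
    unfolding vec_eq_iff
  proof
    fix a show "x $ a = (\<Sum>i\<in>UNIV. x $ Inr i *\<^sub>R axis (Inr i) (1::real)) $ a"
      using assms by (cases a) (auto simp: axis_def ifm2 sum.delta cong: if_cong)
  qed
  have "(\<Sum>i\<in>UNIV. x $ Inr i *\<^sub>R axis (Inr i) 1) \<in> span (range (\<lambda>i::'s. axis (Inr i) (1::real)))"
    by (intro span_sum span_mul span_base) auto
  then show ?thesis by (subst eq)
qed


theorem lemma4p2:
  fixes s_type :: "'s::finite itself"
  assumes "CARD('s) \<ge> 2"
  shows "(\<forall>\<xi>1 \<xi>2 :: real ^ ('s + 's).
            \<xi>1 \<noteq> 0 \<and> \<xi>2 \<noteq> 0 \<and>
            (\<forall>\<eta>1 \<eta>2. B2s \<xi>1 \<xi>2 \<eta>1 \<eta>2 = 0 \<and> B2s \<xi>1 \<eta>1 \<eta>2 \<xi>2 = 0) \<longrightarrow>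
            \<xi>1 \<in> span (range (\<lambda>i::'s. axis (Inr i) 1)) \<and>
            \<xi>2 \<in> span (range (\<lambda>i::'s. axis (Inr i) 1)))
       \<and> \<not> (\<exists>W1 W2 :: (real ^ ('s + 's)) set.
            subspace W1 \<and> subspace W2 \<and> W1 \<noteq> {0} \<and> W2 \<noteq> {0} \<and>
            W1 \<inter> W2 = {0} \<and> {x + y | x y. x \<in> W1 \<and> y \<in> W2} = UNIV \<and>
            (\<forall>x1 x2 x3 x4. (\<exists>i j. i < 4 \<and> j < 4 \<and> i \<noteq> j \<and>
                   [x1, x2, x3, x4] ! i \<in> W1 \<and> [x1, x2, x3, x4] ! j \<in> W2)
                 \<longrightarrow> B2s x1 x2 x3 x4 = 0))"
proof (intro conjI allI impI notI)
  fix \<xi>1 \<xi>2 :: "real ^ ('s + 's)"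
  assume h: "\<xi>1 \<noteq> 0 \<and> \<xi>2 \<noteq> 0 \<and>
            (\<forall>\<eta>1 \<eta>2. B2s \<xi>1 \<xi>2 \<eta>1 \<eta>2 = 0 \<and> B2s \<xi>1 \<eta>1 \<eta>2 \<xi>2 = 0)"
  then have "(\<forall>i. \<xi>1 $ Inl i = 0) \<and> (\<forall>i. \<xi>2 $ Inl i = 0)"
    using part1[OF assms, of \<xi>1 \<xi>2] by blast
  then show "\<xi>1 \<in> span (range (\<lambda>i::'s. axis (Inr i) 1))"
    "\<xi>2 \<in> span (range (\<lambda>i::'s. axis (Inr i) 1))" using inspan by blast+
next
  assume "\<exists>W1 W2 :: (real ^ ('s + 's)) set.
            subspace W1 \<and> subspace W2 \<and> W1 \<noteq> {0} \<and> W2 \<noteq> {0} \<and>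
            W1 \<inter> W2 = {0} \<and> {x + y | x y. x \<in> W1 \<and> y \<in> W2} = UNIV \<and>
            (\<forall>x1 x2 x3 x4. (\<exists>i j. i < 4 \<and> j < 4 \<and> i \<noteq> j \<and>
                   [x1, x2, x3, x4] ! i \<in> W1 \<and> [x1, x2, x3, x4] ! j \<in> W2)
                 \<longrightarrow> B2s x1 x2 x3 x4 = 0)"
  then obtain W1 W2 :: "(real ^ ('s + 's)) set" where
    s1: "subspace W1" and s2: "subspace W2" and n1: "W1 \<noteq> {0}" and n2: "W2 \<noteq> {0}"
    and sum: "{x + y | x y. x \<in> W1 \<and> y \<in> W2} = UNIV"
    and V: "\<forall>x1 x2 x3 x4. (\<exists>i j. i < 4 \<and> j < 4 \<and> i \<noteq> j \<and>
                   [x1, x2, x3, x4] ! i \<in> W1 \<and> [x1, x2, x3, x4] ! j \<in> W2)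
                 \<longrightarrow> B2s x1 x2 x3 x4 = 0" by blast
  have key: "B2s x e1 e2 y = 0" if "x \<in> W1" "y \<in> W2" for x y e1 e2
    using V[rule_format, of x e1 e2 y] that
    by (metis (no_types, lifting) nth_Cons_0 nth_Cons_Suc numeral_3_eq_3 zero_less_numeral
        less_numeral_extra(3) Suc_lessI numeral_eq_Suc pred_numeral_simps(2) semiring_norm(26) semiring_norm(27) zero_neq_numeral)
  obtain x0 where x0: "x0 \<in> W1" "x0 \<noteq> 0" using n1 subspace_0[OF s1] by blast
  obtain y0 where y0: "y0 \<in> W2" "y0 \<noteq> 0" using n2 subspace_0[OF s2] by blast
  have L1: "x $ Inl i = 0" if "x \<in> W1" for x i
  proof (cases "x = 0")
    case False
    then show ?thesis using part1[OF assms False y0(2)] key[OF that y0(1)] by blast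
  qed simp
  have L2: "y $ Inl i = 0" if "y \<in> W2" for y i
  proof (cases "y = 0")
    case False
    then show ?thesis using part1[OF assms x0(2) False] key[OF x0(1) that] by blast
  qed simp
  obtain q :: 's where True by simp
  have "axis (Inl q) (1::real) \<in> {x + y | x y. x \<in> W1 \<and> y \<in> W2}" using sum by simp
  then obtain x y where xy: "x \<in> W1" "y \<in> W2" "axis (Inl q) 1 = x + y" by blast
  have "(x + y) $ Inl q = 0" using L1[OF xy(1)] L2[OF xy(2)] by simp
  then show False using xy(3) by (metis axis_nth zero_neq_one)
qed

end
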